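(* Let $B$ be a Borel ideal of $S=k[x_1,\dots,x_n]$ and suppose $(x_1,\dots,x_p)$ is an associated prime of $S/B$. Then there exists $m\in\mathrm{Bgens}(B)$ such that $x_p$ divides $m$ and $\operatorname{Ann}_{S/B}\!\left(\frac{m}{x_p}\right)=(x_1,\dots,x_p)$.
   Context: A Borel ideal is a monomial ideal closed under Borel moves $m\mapsto m\frac{x_{i_1}}{x_{j_1}}\cdots\frac{x_{i_s}}{x_{j_s}}$ ($i_t<j_t$, all $x_{j_t}\mid m$). For a set $T$ of monomials, $\mathrm{Borel}(T)$ is the smallest Borel ideal containing $T$; $\mathrm{Bgens}(B)$ is the unique minimal set $T$ of monomials with $\mathrm{Borel}(T)=B$. For a monomial $\mu$, $\operatorname{Ann}_{S/B}(\mu)=(B:\mu)=\{f\in S: f\mu\in B\}$. *)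

theory Defs
  imports "HOL-Library.Poly_Mapping"
begin

(* Polynomials over a field 'k in variables x_1..x_n:
   exponent vectors are finitely supported maps nat =>0 nat (variable index -> exponent),
   polynomials are finitely supported maps from exponent vectors to coefficients,
   with convolution product (library instance). *)
type_synonym 'k mpoly = "(nat \<Rightarrow>\<^sub>0 nat) \<Rightarrow>\<^sub>0 'k"

definition monoms :: "nat \<Rightarrow> (nat \<Rightarrow>\<^sub>0 nat) set" where
  "monoms n = {m. Poly_Mapping.keys m \<subseteq> {1..n}}"

definition polyS :: "nat \<Rightarrow> ('k::field) mpoly set" where
  "polyS n = {f. Poly_Mapping.keys f \<subseteq> monoms n}"

definition mono_poly :: "(nat \<Rightarrow>\<^sub>0 nat) \<Rightarrow> ('k::field) mpoly" where
  "mono_poly m = Poly_Mapping.single m 1"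

definition var :: "nat \<Rightarrow> ('k::field) mpoly" where
  "var i = mono_poly (Poly_Mapping.single i 1)"

definition is_ideal :: "nat \<Rightarrow> ('k::field) mpoly set \<Rightarrow> bool" where
  "is_ideal n I \<longleftrightarrow> I \<subseteq> polyS n \<and> 0 \<in> I \<and>
     (\<forall>f\<in>I. \<forall>g\<in>I. f + g \<in> I) \<and> (\<forall>f\<in>I. \<forall>g\<in>polyS n. g * f \<in> I)"

definition ideal_gen :: "nat \<Rightarrow> ('k::field) mpoly set \<Rightarrow> 'k mpoly set" where
  "ideal_gen n G = \<Inter>{I. is_ideal n I \<and> G \<subseteq> I}"

definition prime_ideal :: "nat \<Rightarrow> ('k::field) mpoly set \<Rightarrow> bool" where
  "prime_ideal n P \<longleftrightarrow> is_ideal n P \<and> P \<noteq> polyS n \<and>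
     (\<forall>a\<in>polyS n. \<forall>b\<in>polyS n. a * b \<in> P \<longrightarrow> a \<in> P \<or> b \<in> P)"

(* colon ideal (B : f) = Ann_{S/B}(f) *)
definition colon :: "nat \<Rightarrow> ('k::field) mpoly set \<Rightarrow> 'k mpoly \<Rightarrow> 'k mpoly set" where
  "colon n B f = {g \<in> polyS n. g * f \<in> B}"

definition ass_prime :: "nat \<Rightarrow> ('k::field) mpoly set \<Rightarrow> 'k mpoly set \<Rightarrow> bool" where
  "ass_prime n B P \<longleftrightarrow> prime_ideal n P \<and> (\<exists>f\<in>polyS n. colon n B f = P)"

definition monomial_ideal :: "nat \<Rightarrow> ('k::field) mpoly set \<Rightarrow> bool" where
  "monomial_ideal n B \<longleftrightarrow> is_ideal n B \<and>
     (\<exists>M \<subseteq> monoms n. B = ideal_gen n (mono_poly ` M))"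

(* a Borel move given by a list of pairs (i_t, j_t):
   m |-> m * x_{i_1}...x_{i_s} / (x_{j_1}...x_{j_s}) *)
definition move_num :: "(nat \<times> nat) list \<Rightarrow> (nat \<Rightarrow>\<^sub>0 nat)" where
  "move_num ps = (\<Sum>(i,j)\<leftarrow>ps. Poly_Mapping.single i 1)"

definition move_den :: "(nat \<times> nat) list \<Rightarrow> (nat \<Rightarrow>\<^sub>0 nat)" where
  "move_den ps = (\<Sum>(i,j)\<leftarrow>ps. Poly_Mapping.single j 1)"

definition borel_move_ok :: "nat \<Rightarrow> (nat \<times> nat) list \<Rightarrow> (nat \<Rightarrow>\<^sub>0 nat) \<Rightarrow> bool" where
  "borel_move_ok n ps m \<longleftrightarrow> (\<forall>(i,j)\<in>set ps. 1 \<le> i \<and> i < j \<and> j \<le> n) \<and>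
     (\<forall>k. Poly_Mapping.lookup (move_den ps) k \<le> Poly_Mapping.lookup m k)"

definition borel_ideal :: "nat \<Rightarrow> ('k::field) mpoly set \<Rightarrow> bool" where
  "borel_ideal n B \<longleftrightarrow> monomial_ideal n B \<and>
     (\<forall>m\<in>monoms n. \<forall>ps. mono_poly m \<in> B \<and> borel_move_ok n ps m \<longrightarrow>
        mono_poly (m - move_den ps + move_num ps) \<in> B)"

definition borel_of :: "nat \<Rightarrow> (nat \<Rightarrow>\<^sub>0 nat) set \<Rightarrow> ('k::field) mpoly set" where
  "borel_of n T = \<Inter>{B. borel_ideal n B \<and> mono_poly ` T \<subseteq> B}"

definition bgens :: "nat \<Rightarrow> ('k::field) mpoly set \<Rightarrow> (nat \<Rightarrow>\<^sub>0 nat) set" where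
  "bgens n B = (THE T. T \<subseteq> monoms n \<and> (borel_of n T :: 'k mpoly set) = B \<and>
      (\<forall>T'. T' \<subset> T \<longrightarrow> (borel_of n T' :: 'k mpoly set) \<noteq> B))"

end

theory Submission
  imports Defs
begin

abbreviation E :: "nat \<Rightarrow> (nat \<Rightarrow>\<^sub>0 nat)" where "E i \<equiv> Poly_Mapping.single i 1"

lemma monoms_iff: "m \<in> monoms n \<longleftrightarrow> (\<forall>k. Poly_Mapping.lookup m k \<noteq> 0 \<longrightarrow> 1 \<le> k \<and> k \<le> n)"
  by (auto simp: monoms_def in_keys_iff subset_iff)

lemma monoms_add: "a \<in> monoms n \<Longrightarrow> b \<in> monoms n \<Longrightarrow> a + b \<in> monoms n"
  by (auto simp: monoms_iff lookup_add)

lemma monoms_zero: "0 \<in> monoms n"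
  by (simp add: monoms_def)

lemma monoms_E: "1 \<le> k \<Longrightarrow> k \<le> n \<Longrightarrow> E k \<in> monoms n"
  by (simp add: monoms_def)

lemma monoms_sum: "finite A \<Longrightarrow> (\<forall>a\<in>A. h a \<in> monoms n) \<Longrightarrow> sum h A \<in> monoms n"
  by (induction A rule: finite_induct) (auto simp: monoms_zero monoms_add)

lemma monoms_minus: "a \<in> monoms n \<Longrightarrow> a - b \<in> monoms n"
  by (auto simp: monoms_iff lookup_minus)

lemma expand_pm: "g = (\<Sum>q\<in>Poly_Mapping.keys g. Poly_Mapping.single q (Poly_Mapping.lookup g q))"
proof (rule poly_mapping_eqI)
  fix k
  have "Poly_Mapping.lookup (\<Sum>q\<in>Poly_Mapping.keys g. Poly_Mapping.single q (Poly_Mapping.lookup g q)) k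
      = (\<Sum>q\<in>Poly_Mapping.keys g. if k = q then Poly_Mapping.lookup g q else 0)"
    by (simp add: lookup_sum lookup_single when_def eq_commute)
  also have "\<dots> = Poly_Mapping.lookup g k"
    by (simp add: sum.delta in_keys_iff)
  finally show "Poly_Mapping.lookup g k = Poly_Mapping.lookup (\<Sum>q\<in>Poly_Mapping.keys g. Poly_Mapping.single q (Poly_Mapping.lookup g q)) k" by simp
qed

lemma single_mult_expand:
  fixes g :: "('k::field) mpoly"
  shows "Poly_Mapping.single a c * g = (\<Sum>q\<in>Poly_Mapping.keys g. Poly_Mapping.single (a + q) (c * Poly_Mapping.lookup g q))"
proof -
  have "Poly_Mapping.single a c * g = Poly_Mapping.single a c * (\<Sum>q\<in>Poly_Mapping.keys g. Poly_Mapping.single q (Poly_Mapping.lookup g q))"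
    using expand_pm[of g] by simp
  also have "\<dots> = (\<Sum>q\<in>Poly_Mapping.keys g. Poly_Mapping.single (a + q) (c * Poly_Mapping.lookup g q))"
    by (simp add: sum_distrib_left mult_single)
  finally show ?thesis .
qed

lemma lookup_single_mult:
  fixes g :: "('k::field) mpoly"
  shows "Poly_Mapping.lookup (Poly_Mapping.single a c * g) k =
     (if (\<exists>q. k = a + q) then c * Poly_Mapping.lookup g (k - a) else 0)"
proof -
  have "Poly_Mapping.lookup (Poly_Mapping.single a c * g) k =
        (\<Sum>q\<in>Poly_Mapping.keys g. if k = a + q then c * Poly_Mapping.lookup g q else 0)"
    by (simp add: single_mult_expand lookup_sum lookup_single when_def eq_commute)
  also have "\<dots> = (if (\<exists>q. k = a + q) then c * Poly_Mapping.lookup g (k - a) else 0)"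
  proof (cases "\<exists>q. k = a + q")
    case True
    then obtain q where q: "k = a + q" by blast
    have "(\<Sum>q'\<in>Poly_Mapping.keys g. if k = a + q' then c * Poly_Mapping.lookup g q' else 0)
        = (\<Sum>q'\<in>Poly_Mapping.keys g. if q' = q then c * Poly_Mapping.lookup g q' else 0)"
      by (rule sum.cong) (auto simp: q)
    also have "\<dots> = c * Poly_Mapping.lookup g q" by (simp add: sum.delta' in_keys_iff)
    finally show ?thesis using True q by simp
  next
    case False
    then show ?thesis by (auto intro!: sum.neutral)
  qed
  finally show ?thesis .
qed

lemma keys_mono_mult:
  fixes g :: "('k::field) mpoly"
  shows "Poly_Mapping.keys (Poly_Mapping.single a 1 * g) = (\<lambda>q. a + q) ` Poly_Mapping.keys g"
proof (rule set_eqI)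
  fix x
  show "x \<in> Poly_Mapping.keys (Poly_Mapping.single a 1 * g) \<longleftrightarrow> x \<in> (\<lambda>q. a + q) ` Poly_Mapping.keys g"
  proof
    assume "x \<in> Poly_Mapping.keys (Poly_Mapping.single a 1 * g)"
    then obtain q where "x = a + q" "Poly_Mapping.lookup g (x - a) \<noteq> 0"
      by (auto simp: in_keys_iff lookup_single_mult split: if_splits)
    then show "x \<in> (\<lambda>q. a + q) ` Poly_Mapping.keys g" by (auto simp: in_keys_iff)
  next
    assume "x \<in> (\<lambda>q. a + q) ` Poly_Mapping.keys g"
    then obtain q where "x = a + q" "q \<in> Poly_Mapping.keys g" by auto
    then show "x \<in> Poly_Mapping.keys (Poly_Mapping.single a 1 * g)"
      by (auto simp: in_keys_iff lookup_single_mult)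
  qed
qed

lemma mono_mult: "(mono_poly a :: ('k::field) mpoly) * mono_poly b = mono_poly (a + b)"
  by (simp add: mono_poly_def mult_single)

lemma keys_mono [simp]: "Poly_Mapping.keys (mono_poly a :: ('k::field) mpoly) = {a}"
  by (simp add: mono_poly_def)

lemma mono_polyS: "(mono_poly a :: ('k::field) mpoly) \<in> polyS n \<longleftrightarrow> a \<in> monoms n"
  by (simp add: polyS_def)

lemma polyS_add: "f \<in> polyS n \<Longrightarrow> g \<in> polyS n \<Longrightarrow> f + g \<in> polyS n"
  using keys_add[of f g] by (auto simp: polyS_def)

lemma polyS_mult: "(f::('k::field) mpoly) \<in> polyS n \<Longrightarrow> g \<in> polyS n \<Longrightarrow> f * g \<in> polyS n"
proof -
  assume f: "f \<in> polyS n" and g: "g \<in> polyS n"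
  have "Poly_Mapping.keys (f * g) \<subseteq> monoms n"
  proof
    fix x assume "x \<in> Poly_Mapping.keys (f * g)"
    then obtain a b where "x = a + b" "a \<in> Poly_Mapping.keys f" "b \<in> Poly_Mapping.keys g"
      using keys_mult[of f g] by blast
    then show "x \<in> monoms n" using f g by (auto simp: polyS_def intro!: monoms_add)
  qed
  then show ?thesis by (simp add: polyS_def)
qed

definition J :: "nat \<Rightarrow> (nat \<Rightarrow>\<^sub>0 nat) set \<Rightarrow> ('k::field) mpoly set" where
  "J n U = {f \<in> polyS n. Poly_Mapping.keys f \<subseteq> U}"

definition upclosed :: "nat \<Rightarrow> (nat \<Rightarrow>\<^sub>0 nat) set \<Rightarrow> bool" where
  "upclosed n U \<longleftrightarrow> U \<subseteq> monoms n \<and> (\<forall>u\<in>U. \<forall>c\<in>monoms n. u + c \<in> U)"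

lemma J_ideal: assumes "upclosed n U" shows "is_ideal n (J n U :: ('k::field) mpoly set)"
  unfolding is_ideal_def
proof (intro conjI ballI)
  show "J n U \<subseteq> polyS n" by (auto simp: J_def)
  show "0 \<in> (J n U :: 'k mpoly set)" by (simp add: J_def polyS_def)
  fix f g :: "'k mpoly"
  assume f: "f \<in> J n U"
  { assume g: "g \<in> J n U"
    show "f + g \<in> J n U" using f g keys_add[of f g] by (auto simp: J_def polyS_add) }
  { assume g: "g \<in> polyS n"
    have "Poly_Mapping.keys (g * f) \<subseteq> U"
    proof
      fix x assume "x \<in> Poly_Mapping.keys (g * f)"
      then obtain a b where "x = a + b" "a \<in> Poly_Mapping.keys g" "b \<in> Poly_Mapping.keys f"
        using keys_mult[of g f] by blast
      then have "b \<in> U" "a \<in> monoms n" using f g by (auto simp: J_def polyS_def)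
      then have "b + a \<in> U" using assms by (auto simp: upclosed_def)
      then show "x \<in> U" using \<open>x = a + b\<close> by (simp add: add.commute)
    qed
    then show "g * f \<in> J n U" using f g by (auto simp: J_def polyS_mult) }
qed

lemma sum_in_ideal_aux: "finite A \<Longrightarrow> is_ideal n I \<Longrightarrow> (\<forall>a\<in>A. h a \<in> I) \<Longrightarrow> sum h A \<in> I"
  by (induction A rule: finite_induct) (auto simp: is_ideal_def)

lemma sum_in_ideal: "is_ideal n I \<Longrightarrow> finite A \<Longrightarrow> (\<forall>a\<in>A. h a \<in> I) \<Longrightarrow> sum h A \<in> I"
  using sum_in_ideal_aux by blast

lemma ideal_monos: assumes I: "is_ideal n (I :: ('k::field) mpoly set)" and f: "f \<in> polyS n"
  and m: "\<forall>k\<in>Poly_Mapping.keys f. mono_poly k \<in> I"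
shows "f \<in> I"
proof -
  have "f = (\<Sum>q\<in>Poly_Mapping.keys f. Poly_Mapping.single q (Poly_Mapping.lookup f q))"
    by (rule expand_pm)
  also have "\<dots> \<in> I"
  proof (rule sum_in_ideal[OF I], simp, intro ballI)
    fix q assume q: "q \<in> Poly_Mapping.keys f"
    have "Poly_Mapping.single q (Poly_Mapping.lookup f q) = Poly_Mapping.single 0 (Poly_Mapping.lookup f q) * mono_poly q"
      by (simp add: mono_poly_def mult_single)
    moreover have "Poly_Mapping.single 0 (Poly_Mapping.lookup f q) \<in> polyS n"
      by (auto simp: polyS_def monoms_zero)
    ultimately show "Poly_Mapping.single q (Poly_Mapping.lookup f q) \<in> I"
      using I m q by (auto simp: is_ideal_def)
  qed
  finally show ?thesis .
qed

lemma mono_in_J: "U \<subseteq> monoms n \<Longrightarrow> (mono_poly k :: ('k::field) mpoly) \<in> J n U \<longleftrightarrow> k \<in> U"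
  by (auto simp: J_def mono_polyS)

lemma J_inj: "U \<subseteq> monoms n \<Longrightarrow> V \<subseteq> monoms n \<Longrightarrow> (J n U :: ('k::field) mpoly set) = J n V \<Longrightarrow> U = V"
  by (metis mono_in_J subsetI subset_antisym)

lemma gen_sub: "is_ideal n I \<Longrightarrow> G \<subseteq> I \<Longrightarrow> ideal_gen n G \<subseteq> I"
  by (auto simp: ideal_gen_def)

lemma gen_sup: "G \<subseteq> ideal_gen n G"
  by (auto simp: ideal_gen_def)

lemma J_sub_gen:
  assumes "\<forall>u\<in>U. \<forall>I. is_ideal n I \<and> G \<subseteq> I \<longrightarrow> (mono_poly u :: ('k::field) mpoly) \<in> I"
  shows "(J n U :: 'k mpoly set) \<subseteq> ideal_gen n G"
  using assms ideal_monos by (fastforce simp: ideal_gen_def J_def)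


definition Um :: "nat \<Rightarrow> ('k::field) mpoly set \<Rightarrow> (nat \<Rightarrow>\<^sub>0 nat) set" where
  "Um n B = {m \<in> monoms n. mono_poly m \<in> B}"

lemma monomial_J:
  fixes B :: "('k::field) mpoly set"
  assumes "monomial_ideal n B"
  shows "B = J n (Um n B)" "upclosed n (Um n B)"
proof -
  have I: "is_ideal n B" using assms by (simp add: monomial_ideal_def)
  show up: "upclosed n (Um n B)"
    unfolding upclosed_def Um_def
  proof (intro conjI ballI; clarsimp)
    fix u c assume "u \<in> monoms n" "mono_poly u \<in> B" "c \<in> monoms n"
    moreover have "mono_poly (u + c) = (mono_poly c :: 'k mpoly) * mono_poly u"
      by (simp add: mono_mult add.commute)
    ultimately show "u + c \<in> monoms n \<and> mono_poly (u + c) \<in> B"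
      using I by (auto simp: is_ideal_def mono_polyS monoms_add)
  qed
  have "J n (Um n B) \<subseteq> B"
    using ideal_monos[OF I] by (auto simp: J_def Um_def)
  moreover have "B \<subseteq> J n (Um n B)"
  proof -
    obtain M where M: "M \<subseteq> monoms n" "B = ideal_gen n (mono_poly ` M)"
      using assms by (auto simp: monomial_ideal_def)
    have MB: "mono_poly ` M \<subseteq> B" using M(2) gen_sup[of "mono_poly ` M" n] by auto
    have sub: "Um n B \<subseteq> monoms n" by (auto simp: Um_def)
    have "mono_poly ` M \<subseteq> (J n (Um n B) :: 'k mpoly set)"
    proof clarify
      fix x assume x: "x \<in> M"
      then have "x \<in> Um n B" using M(1) MB by (auto simp: Um_def)
      then show "(mono_poly x :: 'k mpoly) \<in> J n (Um n B)" by (simp add: mono_in_J[OF sub])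
    qed
    then show ?thesis using M(2) gen_sub[OF J_ideal[OF up]] by auto
  qed
  ultimately show "B = J n (Um n B)" by auto
qed

lemma E_plus_minus: "0 < Poly_Mapping.lookup u i \<Longrightarrow> u - E i + E i = u"
  by (rule poly_mapping_eqI) (auto simp: lookup_add lookup_minus lookup_single when_def)

definition UP :: "nat \<Rightarrow> nat \<Rightarrow> (nat \<Rightarrow>\<^sub>0 nat) set" where
  "UP n p = {k \<in> monoms n. \<exists>i. 1 \<le> i \<and> i \<le> p \<and> 0 < Poly_Mapping.lookup k i}"

lemma UP_up: "upclosed n (UP n p)"
  by (auto simp: upclosed_def UP_def monoms_add lookup_add)

lemma P_J:
  assumes "p \<le> n"
  shows "(ideal_gen n {var i | i. 1 \<le> i \<and> i \<le> p} :: ('k::field) mpoly set) = J n (UP n p)"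
proof
  have "{var i | i. 1 \<le> i \<and> i \<le> p} \<subseteq> (J n (UP n p) :: 'k mpoly set)"
  proof clarify
    fix i :: nat assume i: "1 \<le> i" "i \<le> p"
    have "E i \<in> monoms n" using i assms by (intro monoms_E) auto
    then have "E i \<in> UP n p" using i by (auto simp: UP_def)
    then show "(var i :: 'k mpoly) \<in> J n (UP n p)"
      unfolding var_def by (subst mono_in_J) (auto simp: UP_def)
  qed
  then show "ideal_gen n {var i | i. 1 \<le> i \<and> i \<le> p} \<subseteq> (J n (UP n p) :: 'k mpoly set)"
    by (rule gen_sub[OF J_ideal[OF UP_up]])
next
  show "(J n (UP n p) :: 'k mpoly set) \<subseteq> ideal_gen n {var i | i. 1 \<le> i \<and> i \<le> p}"
  proof (rule J_sub_gen, intro ballI allI impI)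
    fix u and I :: "'k mpoly set"
    assume u: "u \<in> UP n p" and I: "is_ideal n I \<and> {var i | i. 1 \<le> i \<and> i \<le> p} \<subseteq> I"
    then obtain i where i: "1 \<le> i" "i \<le> p" "0 < Poly_Mapping.lookup u i" "u \<in> monoms n"
      by (auto simp: UP_def)
    have "var i \<in> I" using I i by auto
    moreover have "(mono_poly (u - E i) :: 'k mpoly) \<in> polyS n"
      using i by (simp add: mono_polyS monoms_minus)
    moreover have "mono_poly (u - E i) * var i = (mono_poly u :: 'k mpoly)"
      using E_plus_minus[of u i] i by (simp add: var_def mono_mult)
    ultimately show "(mono_poly u :: 'k mpoly) \<in> I" using I by (metis is_ideal_def)
  qed
qed

lemma mono_mult_J:
  fixes g :: "('k::field) mpoly"
  assumes U: "U \<subseteq> monoms n" and g: "g \<in> polyS n"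
  shows "mono_poly a * g \<in> J n U \<longleftrightarrow> (\<forall>k\<in>Poly_Mapping.keys g. a + k \<in> U)"
  using U by (auto simp: J_def polyS_def mono_poly_def keys_mono_mult)

lemma colon_mono:
  fixes B :: "('k::field) mpoly set"
  assumes B: "B = J n U" and U: "U \<subseteq> monoms n"
  shows "colon n B (mono_poly \<mu>) = J n {k \<in> monoms n. k + \<mu> \<in> U}"
proof -
  have "g \<in> colon n B (mono_poly \<mu>) \<longleftrightarrow> g \<in> J n {k \<in> monoms n. k + \<mu> \<in> U}" for g
  proof -
    have "g \<in> colon n B (mono_poly \<mu>) \<longleftrightarrow> g \<in> polyS n \<and> mono_poly \<mu> * g \<in> J n U"
      by (simp add: colon_def B mult.commute)
    also have "\<dots> \<longleftrightarrow> g \<in> polyS n \<and> (\<forall>k\<in>Poly_Mapping.keys g. \<mu> + k \<in> U)"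
      using mono_mult_J[OF U] by blast
    also have "\<dots> \<longleftrightarrow> g \<in> J n {k \<in> monoms n. k + \<mu> \<in> U}"
      by (auto simp: J_def polyS_def add.commute)
    finally show ?thesis .
  qed
  then show ?thesis by blast
qed

lemma colon_f_monos:
  fixes B :: "('k::field) mpoly set"
  assumes B: "B = J n U" and U: "U \<subseteq> monoms n" and f: "f \<in> polyS n"
    and k: "k \<in> monoms n"
  shows "mono_poly k \<in> colon n B f \<longleftrightarrow> (\<forall>q\<in>Poly_Mapping.keys f. k + q \<in> U)"
  using mono_mult_J[OF U f, of k] k by (simp add: colon_def B mono_polyS)


lemma move_single: "move_den [(i,j)] = E j" "move_num [(i,j)] = E i"
  by (simp_all add: move_den_def move_num_def)

lemma move_cons: "move_den ((i,j)#ps) = E j + move_den ps" "move_num ((i,j)#ps) = E i + move_num ps"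
  by (simp_all add: move_den_def move_num_def)

lemma move_nil: "move_den [] = 0" "move_num [] = 0"
  by (simp_all add: move_den_def move_num_def)

lemma monoms_move: "m \<in> monoms n \<Longrightarrow> 1 \<le> i \<Longrightarrow> i \<le> n \<Longrightarrow> m - E j + E i \<in> monoms n"
  by (auto simp: monoms_iff lookup_add lookup_minus lookup_single when_def)

lemma borel_single:
  fixes B :: "('k::field) mpoly set"
  assumes "borel_ideal n B" "m \<in> Um n B" "1 \<le> i" "i < j" "j \<le> n" "0 < Poly_Mapping.lookup m j"
  shows "m - E j + E i \<in> Um n B"
proof -
  have ok: "borel_move_ok n [(i,j)] m"
    using assms by (auto simp: borel_move_ok_def move_single lookup_single when_def)
  have "mono_poly (m - move_den [(i,j)] + move_num [(i,j)]) \<in> B"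
    using assms(1) ok assms(2) by (auto simp: borel_ideal_def Um_def)
  then show ?thesis using assms monoms_move[of m n i j] by (auto simp: move_single Um_def)
qed

inductive_set reach :: "nat \<Rightarrow> (nat \<Rightarrow>\<^sub>0 nat) set \<Rightarrow> (nat \<Rightarrow>\<^sub>0 nat) set" for n T where
  base: "t \<in> T \<Longrightarrow> t \<in> monoms n \<Longrightarrow> t \<in> reach n T"
| mul: "m \<in> reach n T \<Longrightarrow> c \<in> monoms n \<Longrightarrow> m + c \<in> reach n T"
| mv: "m \<in> reach n T \<Longrightarrow> 1 \<le> i \<Longrightarrow> i < j \<Longrightarrow> j \<le> n \<Longrightarrow> 0 < Poly_Mapping.lookup m j
        \<Longrightarrow> m - E j + E i \<in> reach n T"

lemma reach_monoms: "m \<in> reach n T \<Longrightarrow> m \<in> monoms n"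
proof (induction rule: reach.induct)
  case (mv m i j)
  then show ?case using monoms_move[of m n i j] by simp
qed (auto simp: monoms_add)

lemma reach_up: "upclosed n (reach n T)"
  using reach_monoms by (auto simp: upclosed_def intro: reach.mul)

lemma reach_moves: "borel_move_ok n ps m \<Longrightarrow> m \<in> reach n T \<Longrightarrow> m - move_den ps + move_num ps \<in> reach n T"
proof (induction ps arbitrary: m)
  case Nil
  then show ?case by (simp add: move_nil)
next
  case (Cons a ps)
  obtain i j where a: "a = (i,j)" by (cases a)
  have ij: "1 \<le> i" "i < j" "j \<le> n" using Cons.prems a by (auto simp: borel_move_ok_def)
  have le: "\<And>k. Poly_Mapping.lookup (E j + move_den ps) k \<le> Poly_Mapping.lookup m k"
    using Cons.prems a by (auto simp: borel_move_ok_def move_cons)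
  have pos: "0 < Poly_Mapping.lookup m j" using le[of j] by (simp add: lookup_add)
  define m' where "m' = m - E j + E i"
  have m': "m' \<in> reach n T" unfolding m'_def using Cons.prems(2) ij pos by (rule reach.mv)
  have ok: "borel_move_ok n ps m'"
    unfolding borel_move_ok_def
  proof (intro conjI)
    show "\<forall>(i, j)\<in>set ps. 1 \<le> i \<and> i < j \<and> j \<le> n" using Cons.prems by (auto simp: borel_move_ok_def)
    show "\<forall>k. Poly_Mapping.lookup (move_den ps) k \<le> Poly_Mapping.lookup m' k"
    proof
      fix k show "Poly_Mapping.lookup (move_den ps) k \<le> Poly_Mapping.lookup m' k"
        using le[of k] by (auto simp: m'_def lookup_add lookup_minus lookup_single when_def)
    qed
  qed
  have "m' - move_den ps + move_num ps \<in> reach n T" using Cons.IH[OF ok m'] .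
  moreover have "m' - move_den ps + move_num ps = m - move_den (a # ps) + move_num (a # ps)"
  proof (rule poly_mapping_eqI)
    fix k show "Poly_Mapping.lookup (m' - move_den ps + move_num ps) k =
      Poly_Mapping.lookup (m - move_den (a # ps) + move_num (a # ps)) k"
      using le[of k] by (auto simp: a m'_def move_cons lookup_add lookup_minus lookup_single when_def)
  qed
  ultimately show ?case by simp
qed

lemma J_reach_gen: "(J n (reach n T) :: ('k::field) mpoly set) = ideal_gen n (mono_poly ` reach n T)"
proof
  show "(J n (reach n T) :: 'k mpoly set) \<subseteq> ideal_gen n (mono_poly ` reach n T)"
    by (rule J_sub_gen) blast
  have sub: "reach n T \<subseteq> monoms n" using reach_monoms by blast
  have "mono_poly ` reach n T \<subseteq> (J n (reach n T) :: 'k mpoly set)"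
    by (auto simp: mono_in_J[OF sub])
  then show "ideal_gen n (mono_poly ` reach n T) \<subseteq> (J n (reach n T) :: 'k mpoly set)"
    by (rule gen_sub[OF J_ideal[OF reach_up]])
qed

lemma J_reach_borel: "borel_ideal n (J n (reach n T) :: ('k::field) mpoly set)"
  unfolding borel_ideal_def monomial_ideal_def
proof (intro conjI)
  show "is_ideal n (J n (reach n T) :: 'k mpoly set)" by (rule J_ideal[OF reach_up])
  show "\<exists>M\<subseteq>monoms n. (J n (reach n T) :: 'k mpoly set) = ideal_gen n (mono_poly ` M)"
    using J_reach_gen reach_monoms by (intro exI[of _ "reach n T"]) blast
  have sub: "reach n T \<subseteq> monoms n" using reach_monoms by blast
  show "\<forall>m\<in>monoms n. \<forall>ps. (mono_poly m :: 'k mpoly) \<in> J n (reach n T) \<and> borel_move_ok n ps m \<longrightarrow>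
        (mono_poly (m - move_den ps + move_num ps) :: 'k mpoly) \<in> J n (reach n T)"
  proof (intro ballI allI impI)
    fix m ps assume "m \<in> monoms n" and h: "(mono_poly m :: 'k mpoly) \<in> J n (reach n T) \<and> borel_move_ok n ps m"
    then have "m \<in> reach n T" using mono_in_J[OF sub] by blast
    then have "m - move_den ps + move_num ps \<in> reach n T" using reach_moves h by blast
    then show "(mono_poly (m - move_den ps + move_num ps) :: 'k mpoly) \<in> J n (reach n T)"
      using mono_in_J[OF sub] by blast
  qed
qed

lemma reach_in_borel:
  fixes B' :: "('k::field) mpoly set"
  assumes B': "borel_ideal n B'" and T: "mono_poly ` T \<subseteq> B'"
  shows "m \<in> reach n T \<Longrightarrow> mono_poly m \<in> B'"
proof (induction rule: reach.induct)
  case (base t) then show ?case using T by auto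
next
  case (mul m c)
  have I: "is_ideal n B'" using B' by (simp add: borel_ideal_def monomial_ideal_def)
  have "mono_poly (m + c) = (mono_poly c :: 'k mpoly) * mono_poly m"
    by (simp add: mono_mult add.commute)
  then show ?case using I mul by (auto simp: is_ideal_def mono_polyS)
next
  case (mv m i j)
  have ok: "borel_move_ok n [(i,j)] m"
    using mv by (auto simp: borel_move_ok_def move_single lookup_single when_def)
  have "mono_poly (m - move_den [(i,j)] + move_num [(i,j)]) \<in> B'"
    using B' ok mv reach_monoms[OF mv.hyps(1)] unfolding borel_ideal_def by blast
  then show ?case by (simp only: move_single)
qed

lemma borel_of_reach:
  assumes "T \<subseteq> monoms n"
  shows "(borel_of n T :: ('k::field) mpoly set) = J n (reach n T)"
proof
  have "mono_poly ` T \<subseteq> (J n (reach n T) :: 'k mpoly set)"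
    using assms mono_in_J[of "reach n T" n] reach_monoms reach.base by blast
  then show "(borel_of n T :: 'k mpoly set) \<subseteq> J n (reach n T)"
    using J_reach_borel unfolding borel_of_def by blast
  show "(J n (reach n T) :: 'k mpoly set) \<subseteq> borel_of n T"
    unfolding borel_of_def
  proof (rule Inter_greatest, clarify)
    fix B' :: "'k mpoly set" and f :: "'k mpoly"
    assume B': "borel_ideal n B'" "mono_poly ` T \<subseteq> B'" and f: "f \<in> J n (reach n T)"
    have I: "is_ideal n B'" using B' by (simp add: borel_ideal_def monomial_ideal_def)
    show "f \<in> B'"
      using ideal_monos[OF I] f reach_in_borel[OF B'] by (auto simp: J_def)
  qed
qed


definition F :: "nat \<Rightarrow> (nat \<Rightarrow>\<^sub>0 nat) \<Rightarrow> nat" where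
  "F n u = (\<Sum>i\<in>{1..n}. Poly_Mapping.lookup u i * (n + 1 - i))"

lemma F_add: "F n (a + b) = F n a + F n b"
  by (simp add: F_def lookup_add sum.distrib distrib_right)

lemma F_E: assumes "1 \<le> k" "k \<le> n" shows "F n (E k) = n + 1 - k"
proof -
  have "F n (E k) = (\<Sum>i\<in>{1..n}. if k = i then n + 1 - i else 0)"
    unfolding F_def by (rule sum.cong) (auto simp: lookup_single when_def)
  also have "\<dots> = n + 1 - k" using assms by (simp add: sum.delta)
  finally show ?thesis .
qed

lemma lk: "a = b \<Longrightarrow> Poly_Mapping.lookup a x = Poly_Mapping.lookup b x" by simp

definition irred :: "nat \<Rightarrow> (nat \<Rightarrow>\<^sub>0 nat) set \<Rightarrow> (nat \<Rightarrow>\<^sub>0 nat) \<Rightarrow> bool" where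
  "irred n U m \<longleftrightarrow> m \<in> U \<and> \<not>(\<exists>w k. w \<in> U \<and> 1 \<le> k \<and> k \<le> n \<and> m = w + E k) \<and>
     \<not>(\<exists>w i j. w \<in> U \<and> 1 \<le> i \<and> i < j \<and> j \<le> n \<and> 0 < Poly_Mapping.lookup w j \<and> m = w - E j + E i)"

lemma reach_decomp:
  "m \<in> reach n T \<Longrightarrow> m \<in> T \<or> (\<exists>w k. w \<in> reach n T \<and> 1 \<le> k \<and> k \<le> n \<and> m = w + E k) \<or>
     (\<exists>w i j. w \<in> reach n T \<and> 1 \<le> i \<and> i < j \<and> j \<le> n \<and> 0 < Poly_Mapping.lookup w j \<and> m = w - E j + E i)"
proof (induction rule: reach.induct)
  case (base t) then show ?case by blast
next
  case (mul m c)
  show ?case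
  proof (cases "c = 0")
    case True then show ?thesis using mul by simp
  next
    case False
    then obtain k where k: "Poly_Mapping.lookup c k \<noteq> 0"
      by (metis lookup_zero poly_mapping_eqI)
    have kn: "1 \<le> k" "k \<le> n" using mul.hyps(2) k by (auto simp: monoms_iff)
    have w: "m + (c - E k) \<in> reach n T"
      using mul.hyps(1) monoms_minus[OF mul.hyps(2)] by (rule reach.mul)
    have "m + c = (m + (c - E k)) + E k"
      by (rule poly_mapping_eqI) (use k in \<open>auto simp: lookup_add lookup_minus lookup_single when_def\<close>)
    then show ?thesis using w kn by blast
  qed
next
  case (mv m i j) then show ?case by blast
qed

lemma G_sub_T:
  assumes "reach n T = U" and g: "irred n U g"
  shows "g \<in> T"
  using reach_decomp[of g n T] assms unfolding irred_def by blast

lemma reach_irred: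
  fixes B :: "('k::field) mpoly set"
  assumes B: "borel_ideal n B"
  shows "reach n {m. irred n (Um n B) m} = Um n B"
proof
  let ?U = "Um n B"
  have mon: "monomial_ideal n B" using B by (simp add: borel_ideal_def)
  have up: "upclosed n ?U" using monomial_J[OF mon] by simp
  have "mono_poly ` {m. irred n ?U m} \<subseteq> B" by (auto simp: irred_def Um_def)
  then show "reach n {m. irred n ?U m} \<subseteq> ?U"
    using reach_in_borel[OF B] reach_monoms by (auto simp: Um_def)
  show "?U \<subseteq> reach n {m. irred n ?U m}"
  proof
    fix u assume "u \<in> ?U"
    then show "u \<in> reach n {m. irred n ?U m}"
    proof (induction u rule: measure_induct_rule[of "F n"])
      case (less u)
      have um: "u \<in> monoms n" using less.prems by (simp add: Um_def)
      show ?case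
      proof (cases "irred n ?U u")
        case True then show ?thesis using um by (auto intro: reach.base)
      next
        case False
        then consider (a) w k where "w \<in> ?U" "1 \<le> k" "k \<le> n" "u = w + E k"
          | (b) w i j where "w \<in> ?U" "1 \<le> i" "i < j" "j \<le> n" "0 < Poly_Mapping.lookup w j" "u = w - E j + E i"
          using less.prems unfolding irred_def by blast
        then show ?thesis
        proof cases
          case a
          have "F n (E k) = n + 1 - k" by (rule F_E) (use a in auto)
          then have "F n u = F n w + (n + 1 - k)" using a F_add[of n w "E k"] by simp
          then have "F n w < F n u" using a by simp
          then have "w \<in> reach n {m. irred n ?U m}" using less.IH a by blast
          then show ?thesis using a monoms_E[of k n] reach.mul by metis
        next
          case b
          have "u + E j = w + E i"
            by (rule poly_mapping_eqI) (use b in \<open>auto simp: lookup_add lookup_minus lookup_single when_def\<close>)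
          moreover have "F n (E j) = n + 1 - j" by (rule F_E) (use b in auto)
          moreover have "F n (E i) = n + 1 - i" by (rule F_E) (use b in auto)
          ultimately have "F n u + (n + 1 - j) = F n w + (n + 1 - i)"
            using F_add[of n u "E j"] F_add[of n w "E i"] by simp
          then have "F n w < F n u" using b by simp
          then have "w \<in> reach n {m. irred n ?U m}" using less.IH b by blast
          then show ?thesis using b reach.mv by metis
        qed
      qed
    qed
  qed
qed

lemma bgens_eq:
  fixes B :: "('k::field) mpoly set"
  assumes B: "borel_ideal n B"
  shows "bgens n B = {m. irred n (Um n B) m}"
proof -
  let ?U = "Um n B" and ?G = "{m. irred n (Um n B) m}"
  have mon: "monomial_ideal n B" using B by (simp add: borel_ideal_def)
  have BJ: "B = J n ?U" using monomial_J[OF mon] by simp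
  have Um_sub: "?U \<subseteq> monoms n" by (auto simp: Um_def)
  have Gm: "?G \<subseteq> monoms n" by (auto simp: irred_def Um_def)
  have key: "(borel_of n T :: 'k mpoly set) = B \<longleftrightarrow> reach n T = ?U" if T: "T \<subseteq> monoms n" for T
  proof
    assume "(borel_of n T :: 'k mpoly set) = B"
    then have "(J n (reach n T) :: 'k mpoly set) = J n ?U" using borel_of_reach[OF T] BJ by metis
    then show "reach n T = ?U" using J_inj[OF _ Um_sub] reach_monoms by blast
  next
    assume "reach n T = ?U"
    then show "(borel_of n T :: 'k mpoly set) = B" using borel_of_reach[OF T] BJ by metis
  qed
  have GB: "(borel_of n ?G :: 'k mpoly set) = B" using key[OF Gm] reach_irred[OF B] by simp
  show ?thesis
    unfolding bgens_def
  proof (rule the_equality)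
    show "?G \<subseteq> monoms n \<and> (borel_of n ?G :: 'k mpoly set) = B \<and>
      (\<forall>T'. T' \<subset> ?G \<longrightarrow> (borel_of n T' :: 'k mpoly set) \<noteq> B)"
    proof (intro conjI Gm GB allI impI notI)
      fix T' assume T': "T' \<subset> ?G" "(borel_of n T' :: 'k mpoly set) = B"
      have "T' \<subseteq> monoms n" using T' Gm by blast
      then have "reach n T' = ?U" using key T' by blast
      then have "?G \<subseteq> T'" using G_sub_T by blast
      then show False using T' by blast
    qed
  next
    fix T assume T: "T \<subseteq> monoms n \<and> (borel_of n T :: 'k mpoly set) = B \<and>
      (\<forall>T'. T' \<subset> T \<longrightarrow> (borel_of n T' :: 'k mpoly set) \<noteq> B)"
    then have "reach n T = ?U" using key by blast
    then have "?G \<subseteq> T" using G_sub_T by blast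
    then show "T = ?G" using T GB by blast
  qed
qed


definition good :: "nat \<Rightarrow> nat \<Rightarrow> (nat \<Rightarrow>\<^sub>0 nat) set \<Rightarrow> (nat \<Rightarrow>\<^sub>0 nat) \<Rightarrow> bool" where
  "good n p U \<mu> \<longleftrightarrow> \<mu> \<in> monoms n \<and> (\<forall>\<kappa>\<in>monoms n. \<kappa> + \<mu> \<in> U \<longleftrightarrow> \<kappa> \<in> UP n p)"

definition bclosed :: "nat \<Rightarrow> (nat \<Rightarrow>\<^sub>0 nat) set \<Rightarrow> bool" where
  "bclosed n U \<longleftrightarrow> (\<forall>m i j. m \<in> U \<longrightarrow> 1 \<le> i \<longrightarrow> i < j \<longrightarrow> j \<le> n \<longrightarrow> 0 < Poly_Mapping.lookup m j
      \<longrightarrow> m - E j + E i \<in> U)"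

lemma good_intro:
  assumes up: "upclosed n U" and bc: "bclosed n U" and p: "1 \<le> p" "p \<le> n"
    and mu: "\<mu> \<in> monoms n" and Ep: "E p + \<mu> \<in> U"
    and h: "\<forall>\<kappa>\<in>monoms n. \<kappa> + \<mu> \<in> U \<longrightarrow> \<kappa> \<in> UP n p"
  shows "good n p U \<mu>"
  unfolding good_def
proof (intro conjI mu ballI iffI)
  fix \<kappa> assume k: "\<kappa> \<in> monoms n"
  { assume "\<kappa> + \<mu> \<in> U" then show "\<kappa> \<in> UP n p" using h k by blast }
  assume "\<kappa> \<in> UP n p"
  then obtain i where i: "1 \<le> i" "i \<le> p" "0 < Poly_Mapping.lookup \<kappa> i" by (auto simp: UP_def)
  have Ei: "E i + \<mu> \<in> U"
  proof (cases "i = p")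
    case True then show ?thesis using Ep by simp
  next
    case False
    then have "i < p" using i by simp
    moreover have "0 < Poly_Mapping.lookup (E p + \<mu>) p" by (simp add: lookup_add)
    ultimately have "(E p + \<mu>) - E p + E i \<in> U" using bc Ep i p unfolding bclosed_def by blast
    moreover have "(E p + \<mu>) - E p + E i = E i + \<mu>"
      by (rule poly_mapping_eqI) (auto simp: lookup_add lookup_minus lookup_single when_def)
    ultimately show ?thesis by simp
  qed
  have "(E i + \<mu>) + (\<kappa> - E i) \<in> U" using up Ei monoms_minus[OF k] by (auto simp: upclosed_def)
  moreover have "(E i + \<mu>) + (\<kappa> - E i) = \<kappa> + \<mu>"
    by (rule poly_mapping_eqI) (use i in \<open>auto simp: lookup_add lookup_minus lookup_single when_def\<close>)
  ultimately show "\<kappa> + \<mu> \<in> U" by simp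
qed

lemma descent:
  assumes up: "upclosed n U" and bc: "bclosed n U" and p: "1 \<le> p" "p \<le> n"
    and ex: "good n p U \<mu>0"
  shows "\<exists>\<mu>. good n p U \<mu> \<and> irred n U (E p + \<mu>)"
proof -
  obtain \<mu> where g: "good n p U \<mu>" and mn: "\<forall>y. good n p U y \<longrightarrow> F n \<mu> \<le> F n y"
    using ex_has_least_nat[of "good n p U" \<mu>0 "F n"] ex by blast
  have mu: "\<mu> \<in> monoms n" using g by (simp add: good_def)
  have Epm: "E p \<in> monoms n" using p by (intro monoms_E) auto
  have EpUP: "E p \<in> UP n p" using Epm p by (auto simp: UP_def)
  have in_U: "E p + \<mu> \<in> U" using g Epm EpUP by (simp add: good_def)
  have zero_not: "\<mu> \<notin> U"
  proof
    assume "\<mu> \<in> U"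
    then have "0 + \<mu> \<in> U" by simp
    then have "0 \<in> UP n p" using g monoms_zero[of n] unfolding good_def by blast
    then show False by (simp add: UP_def)
  qed
  have c1: "\<not>(\<exists>w k. w \<in> U \<and> 1 \<le> k \<and> k \<le> n \<and> E p + \<mu> = w + E k)"
  proof
    assume "\<exists>w k. w \<in> U \<and> 1 \<le> k \<and> k \<le> n \<and> E p + \<mu> = w + E k"
    then obtain w k where w: "w \<in> U" "1 \<le> k" "k \<le> n" and eq: "E p + \<mu> = w + E k" by blast
    have L: "Poly_Mapping.lookup (E p + \<mu>) x = Poly_Mapping.lookup (w + E k) x" for x using eq by simp
    show False
    proof (cases "k = p")
      case True
      have "\<mu> = w"
        apply (rule poly_mapping_eqI)
        subgoal for x using L[of x] True by (auto simp: lookup_add lookup_single when_def split: if_splits)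
        done
      then show False using zero_not w by simp
    next
      case False
      have pos: "0 < Poly_Mapping.lookup \<mu> k" using L[of k] False by (simp add: lookup_add lookup_single)
      define \<mu>2 where "\<mu>2 = \<mu> - E k"
      have m2: "\<mu>2 \<in> monoms n" using mu by (simp add: \<mu>2_def monoms_minus)
      have wEq: "w = E p + \<mu>2"
        apply (rule poly_mapping_eqI)
        subgoal for x using L[of x] False pos by (auto simp: \<mu>2_def lookup_add lookup_minus lookup_single when_def split: if_splits)
        done
      have muEq: "\<mu> = \<mu>2 + E k"
        by (rule poly_mapping_eqI) (use pos in \<open>auto simp: \<mu>2_def lookup_add lookup_minus lookup_single when_def\<close>)
      have Ekm: "E k \<in> monoms n" using w by (intro monoms_E) auto
      have "good n p U \<mu>2"
      proof (rule good_intro[OF up bc p m2])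
        show "E p + \<mu>2 \<in> U" using w wEq by simp
        show "\<forall>\<kappa>\<in>monoms n. \<kappa> + \<mu>2 \<in> U \<longrightarrow> \<kappa> \<in> UP n p"
        proof (intro ballI impI)
          fix \<kappa> assume k: "\<kappa> \<in> monoms n" "\<kappa> + \<mu>2 \<in> U"
          then have "(\<kappa> + \<mu>2) + E k \<in> U" using up Ekm by (auto simp: upclosed_def)
          then have "\<kappa> + \<mu> \<in> U" using muEq by (simp add: add.assoc)
          then show "\<kappa> \<in> UP n p" using g k by (simp add: good_def)
        qed
      qed
      moreover have "F n (E k) = n + 1 - k" by (rule F_E) (use w in auto)
      then have "F n \<mu>2 < F n \<mu>" using muEq F_add[of n \<mu>2 "E k"] w by simp
      ultimately show False using mn by fastforce
    qed
  qed
  have c2: "\<not>(\<exists>w i j. w \<in> U \<and> 1 \<le> i \<and> i < j \<and> j \<le> n \<and> 0 < Poly_Mapping.lookup w j \<and> E p + \<mu> = w - E j + E i)"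
  proof
    assume "\<exists>w i j. w \<in> U \<and> 1 \<le> i \<and> i < j \<and> j \<le> n \<and> 0 < Poly_Mapping.lookup w j \<and> E p + \<mu> = w - E j + E i"
    then obtain w i j where w: "w \<in> U" "1 \<le> i" "i < j" "j \<le> n" "0 < Poly_Mapping.lookup w j"
      and eq: "E p + \<mu> = w - E j + E i" by blast
    have L: "Poly_Mapping.lookup (E p + \<mu>) x = Poly_Mapping.lookup (w - E j + E i) x" for x using eq by simp
    show False
    proof (cases "i = p")
      case True
      have "w = E j + \<mu>"
        apply (rule poly_mapping_eqI)
        subgoal for x using L[of x] True w by (auto simp: lookup_add lookup_minus lookup_single when_def split: if_splits)
        done
      moreover have "E j \<in> monoms n" using w by (intro monoms_E) auto
      ultimately have "E j \<in> UP n p" using g w by (simp add: good_def)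
      then obtain i' where "1 \<le> i'" "i' \<le> p" "0 < Poly_Mapping.lookup (E j) i'" by (auto simp: UP_def)
      then show False using True w by (auto simp: lookup_single when_def split: if_splits)
    next
      case False
      have pos: "0 < Poly_Mapping.lookup \<mu> i" using L[of i] False w by (simp add: lookup_add lookup_minus lookup_single)
      define \<mu>2 where "\<mu>2 = \<mu> - E i + E j"
      have m2: "\<mu>2 \<in> monoms n" unfolding \<mu>2_def by (rule monoms_move) (use mu w in auto)
      have wEq: "w = E p + \<mu>2"
        apply (rule poly_mapping_eqI)
        subgoal for x using L[of x] False pos w by (auto simp: \<mu>2_def lookup_add lookup_minus lookup_single when_def split: if_splits)
        done
      have muEq: "\<mu>2 + E i = \<mu> + E j"
        by (rule poly_mapping_eqI) (use pos in \<open>auto simp: \<mu>2_def lookup_add lookup_minus lookup_single when_def\<close>)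
      have "good n p U \<mu>2"
      proof (rule good_intro[OF up bc p m2])
        show "E p + \<mu>2 \<in> U" using w wEq by simp
        show "\<forall>\<kappa>\<in>monoms n. \<kappa> + \<mu>2 \<in> U \<longrightarrow> \<kappa> \<in> UP n p"
        proof (intro ballI impI)
          fix \<kappa> assume k: "\<kappa> \<in> monoms n" "\<kappa> + \<mu>2 \<in> U"
          have "0 < Poly_Mapping.lookup (\<kappa> + \<mu>2) j" by (simp add: \<mu>2_def lookup_add lookup_minus lookup_single)
          then have "(\<kappa> + \<mu>2) - E j + E i \<in> U" using bc k w unfolding bclosed_def by blast
          moreover have "(\<kappa> + \<mu>2) - E j + E i = \<kappa> + \<mu>"
            by (rule poly_mapping_eqI) (use pos w in \<open>auto simp: \<mu>2_def lookup_add lookup_minus lookup_single when_def\<close>)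
          ultimately have "\<kappa> + \<mu> \<in> U" by simp
          then show "\<kappa> \<in> UP n p" using g k by (simp add: good_def)
        qed
      qed
      moreover have "F n (E i) = n + 1 - i" by (rule F_E) (use w in auto)
      moreover have "F n (E j) = n + 1 - j" by (rule F_E) (use w in auto)
      ultimately have "good n p U \<mu>2" "F n \<mu>2 + (n + 1 - i) = F n \<mu> + (n + 1 - j)"
        using F_add[of n \<mu>2 "E i"] F_add[of n \<mu> "E j"] muEq by simp_all
      then have "F n \<mu>2 < F n \<mu>" using w by simp
      then show False using mn \<open>good n p U \<mu>2\<close> by fastforce
    qed
  qed
  show ?thesis using g in_U c1 c2 unfolding irred_def by blast
qed


lemma exists_good:
  fixes B :: "('k::field) mpoly set"
  assumes BJ: "B = J n U" and up: "upclosed n U" and f: "f \<in> polyS n"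
    and col: "colon n B f = J n (UP n p)"
  shows "\<exists>\<mu>. good n p U \<mu>"
proof -
  have Us: "U \<subseteq> monoms n" using up by (simp add: upclosed_def)
  have UPs: "UP n p \<subseteq> monoms n" by (auto simp: UP_def)
  have star: "(\<forall>q\<in>Poly_Mapping.keys f. \<kappa> + q \<in> U) \<longleftrightarrow> \<kappa> \<in> UP n p" if k: "\<kappa> \<in> monoms n" for \<kappa>
    using colon_f_monos[OF BJ Us f k] col mono_in_J[where 'k='k, OF UPs, of \<kappa>] by simp
  have fk: "Poly_Mapping.keys f \<subseteq> monoms n" using f by (simp add: polyS_def)
  show ?thesis
  proof (rule ccontr)
    assume nex: "\<not> (\<exists>\<mu>. good n p U \<mu>)"
    have "\<forall>q\<in>Poly_Mapping.keys f. \<exists>\<kappa>. \<kappa> \<in> monoms n \<and> \<kappa> + q \<in> U \<and> \<kappa> \<notin> UP n p"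
    proof (rule ccontr)
      assume "\<not> (\<forall>q\<in>Poly_Mapping.keys f. \<exists>\<kappa>. \<kappa> \<in> monoms n \<and> \<kappa> + q \<in> U \<and> \<kappa> \<notin> UP n p)"
      then obtain q where q: "q \<in> Poly_Mapping.keys f" and h: "\<forall>\<kappa>\<in>monoms n. \<kappa> + q \<in> U \<longrightarrow> \<kappa> \<in> UP n p"
        by blast
      have "good n p U q"
        unfolding good_def using q fk h star by blast
      then show False using nex by blast
    qed
    then obtain h where h: "\<forall>q\<in>Poly_Mapping.keys f. h q \<in> monoms n \<and> h q + q \<in> U \<and> h q \<notin> UP n p"
      by metis
    define K where "K = (\<Sum>q\<in>Poly_Mapping.keys f. h q)"
    have Km: "K \<in> monoms n" unfolding K_def by (rule monoms_sum) (use h in auto)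
    have "\<forall>q\<in>Poly_Mapping.keys f. K + q \<in> U"
    proof
      fix q assume q: "q \<in> Poly_Mapping.keys f"
      have "K = h q + (\<Sum>q'\<in>Poly_Mapping.keys f - {q}. h q')"
        unfolding K_def using q by (simp add: sum.remove)
      moreover have "(\<Sum>q'\<in>Poly_Mapping.keys f - {q}. h q') \<in> monoms n"
        by (rule monoms_sum) (use h in auto)
      ultimately show "K + q \<in> U" using h q up unfolding upclosed_def
        by (metis add.assoc add.commute)
    qed
    then have "K \<in> UP n p" using star[OF Km] by blast
    then obtain i where i: "1 \<le> i" "i \<le> p" "0 < Poly_Mapping.lookup K i" by (auto simp: UP_def)
    have "Poly_Mapping.lookup K i = (\<Sum>q\<in>Poly_Mapping.keys f. Poly_Mapping.lookup (h q) i)"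
      by (simp add: K_def lookup_sum)
    also have "\<dots> = 0"
    proof (rule sum.neutral, rule ballI)
      fix q assume "q \<in> Poly_Mapping.keys f"
      then have "h q \<in> monoms n" "h q \<notin> UP n p" using h by auto
      then show "Poly_Mapping.lookup (h q) i = 0" using i by (auto simp: UP_def)
    qed
    finally show False using i by simp
  qed
qed

theorem theorem3p2:
  fixes B :: "('k::field) mpoly set" and n p :: nat
  assumes "borel_ideal n B"
    and "1 \<le> p" and "p \<le> n"
    and "ass_prime n B (ideal_gen n {var i | i. 1 \<le> i \<and> i \<le> p})"
  shows "\<exists>m\<in>bgens n B. 0 < Poly_Mapping.lookup m p \<and>
           colon n B (mono_poly (m - Poly_Mapping.single p 1))
             = ideal_gen n {var i | i. 1 \<le> i \<and> i \<le> p}"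
proof -
  let ?U = "Um n B"
  have mon: "monomial_ideal n B" using assms(1) by (simp add: borel_ideal_def)
  have BJ: "B = J n ?U" and up: "upclosed n ?U" using monomial_J[OF mon] by auto
  have Us: "?U \<subseteq> monoms n" using up by (simp add: upclosed_def)
  have bc: "bclosed n ?U" unfolding bclosed_def using borel_single[OF assms(1)] by blast
  have PJ: "(ideal_gen n {var i | i. 1 \<le> i \<and> i \<le> p} :: 'k mpoly set) = J n (UP n p)"
    using P_J[OF assms(3)] .
  obtain f where f: "f \<in> polyS n" "colon n B f = J n (UP n p)"
    using assms(4) PJ by (auto simp: ass_prime_def)
  obtain \<mu>0 where "good n p ?U \<mu>0" using exists_good[OF BJ up f] by blast
  then obtain \<mu> where g: "good n p ?U \<mu>" and ir: "irred n ?U (E p + \<mu>)"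
    using descent[OF up bc assms(2,3)] by blast
  have mb: "E p + \<mu> \<in> bgens n B" using bgens_eq[OF assms(1)] ir by simp
  have pos: "0 < Poly_Mapping.lookup (E p + \<mu>) p" by (simp add: lookup_add)
  have sub: "(E p + \<mu>) - E p = \<mu>"
    by (rule poly_mapping_eqI) (simp add: lookup_add lookup_minus)
  have set_eq: "{k \<in> monoms n. k + \<mu> \<in> ?U} = UP n p"
    using g by (auto simp: good_def UP_def)
  have "colon n B (mono_poly \<mu>) = J n (UP n p)"
    using colon_mono[OF BJ Us, of \<mu>] set_eq by simp
  then show ?thesis using mb pos sub PJ by metis
qed

end
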